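(* Let $m>1$, $D>0$, $r\ge0$, $c>0$. Let $d\in C^2([0,+\infty))$ with $d(0)=0$, $d'(s)>0$, $d''(s)\ge0$ for $s>0$. Let $b:[0,+\infty)\to[0,+\infty)$ be continuous and suppose there are $0<\zeta_1<\zeta_2$ such that: (1) $b([\zeta_1,\zeta_2])\subseteq[d(\zeta_1),d(\zeta_2)]$ and $b([0,\zeta_1])\subseteq[0,d(\zeta_2)]$; (2) $\min_{s\in[\zeta_1,\zeta_2]}b(s)=b(\zeta_1)$; (3) $b(s)>d(s)$ for $s\in(0,\zeta_1]$, and $b$ is differentiable at $0$ with $b'(0)>d'(0)$; (4) in $[0,\zeta_2]$ the equation $b(s)=d(s)$ has exactly two solutions, $0$ and $\kappa$; and additionally $\sup_{s\ge0}b(s)\le d(\zeta_2)$. Then every non-trivial wave solution $\phi$ (semi-wavefront or wavefront) of $$c\phi'(t)=D(\phi^m)''(t)-d(\phi(t))+b(\phi(t-cr)),\qquad t\in\mathbb R,$$ satisfies $$0<\zeta_1\le\liminf_{t\to+\infty}\phi(t)\le\limsup_{t\to+\infty}\phi(t)\le\zeta_2<+\infty.$$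
   Context: Definitions: a function $0\le\phi\in W^{1,1}_{\rm loc}(\mathbb R)\cap L^\infty(\mathbb R)$ with $\phi^m\in W^{1,1}_{\rm loc}(\mathbb R)$ is a semi-wavefront (of speed $c$) if (i) it satisfies the equation in the sense of distributions; (ii) $\phi(-\infty)=0$ and $0<\liminf_{t\to+\infty}\phi\le\limsup_{t\to+\infty}\phi<+\infty$; (iii) there is a maximal interval $(-\infty,t_0)$, $t_0\in(-\infty,+\infty]$, on which $\phi$ is monotonically increasing, and if $t_0<+\infty$ then $\phi(t_0)>\kappa$. A wavefront is a semi-wavefront with $\phi(+\infty)=\kappa$. (These conditions (1)–(4) hold e.g. when $b\in C^1$ is unimodal with unique maximum point $s_M<\kappa$, $M=b(s_M)$, $\zeta_2=d^{-1}(M)$, $\zeta_1\in(0,s_M)$ with $b(\zeta_1)=b(\zeta_2)$, $b(0)=0$, $b(\kappa)=d(\kappa)$, $b'(0)>d'(0)$, $b'(\kappa)<d'(\kappa)$, $d<b\le b'(0)s$ on $(0,\kappa)$.) *)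

theory Defs
  imports "HOL-Analysis.Analysis"
begin

definition smooth_fun :: "(real \<Rightarrow> real) \<Rightarrow> bool" where
  "smooth_fun \<psi> \<longleftrightarrow> (\<forall>k::nat. \<forall>t. ((deriv ^^ k) \<psi>) differentiable (at t))"

definition test_fun :: "(real \<Rightarrow> real) \<Rightarrow> bool" where
  "test_fun \<psi> \<longleftrightarrow> smooth_fun \<psi> \<and> (\<exists>K. compact K \<and> (\<forall>t. t \<notin> K \<longrightarrow> \<psi> t = 0))"

definition loc_integrable :: "(real \<Rightarrow> real) \<Rightarrow> bool" where
  "loc_integrable f \<longleftrightarrow> (\<forall>a b. set_integrable lborel {a..b} f)"

definition W11_loc :: "(real \<Rightarrow> real) \<Rightarrow> bool" where
  "W11_loc f \<longleftrightarrow> loc_integrable f \<and>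
     (\<exists>g. loc_integrable g \<and>
        (\<forall>\<psi>. test_fun \<psi> \<longrightarrow>
           (LINT t|lborel. f t * deriv \<psi> t) = - (LINT t|lborel. g t * \<psi> t)))"

definition solves_eq ::
  "real \<Rightarrow> real \<Rightarrow> real \<Rightarrow> real \<Rightarrow> (real \<Rightarrow> real) \<Rightarrow> (real \<Rightarrow> real) \<Rightarrow> (real \<Rightarrow> real) \<Rightarrow> bool" where
  "solves_eq m D r c d b \<phi> \<longleftrightarrow>
     (\<forall>\<psi>. test_fun \<psi> \<longrightarrow>
        - c * (LINT t|lborel. \<phi> t * deriv \<psi> t)
        = D * (LINT t|lborel. (\<phi> t powr m) * deriv (deriv \<psi>) t)
          - (LINT t|lborel. d (\<phi> t) * \<psi> t)
          + (LINT t|lborel. b (\<phi> (t - c * r)) * \<psi> t))"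

text \<open>Semi-wavefront of speed c (phi is taken to be the continuous representative).\<close>
definition semi_wavefront ::
  "real \<Rightarrow> real \<Rightarrow> real \<Rightarrow> real \<Rightarrow> (real \<Rightarrow> real) \<Rightarrow> (real \<Rightarrow> real) \<Rightarrow> real \<Rightarrow> (real \<Rightarrow> real) \<Rightarrow> bool" where
  "semi_wavefront m D r c d b \<kappa> \<phi> \<longleftrightarrow>
     (\<forall>t. 0 \<le> \<phi> t) \<and> continuous_on UNIV \<phi> \<and> W11_loc \<phi> \<and> bounded (range \<phi>) \<and>
     W11_loc (\<lambda>t. \<phi> t powr m) \<and>
     solves_eq m D r c d b \<phi> \<and>
     (\<phi> \<longlongrightarrow> 0) at_bot \<and>
     0 < Liminf at_top (\<lambda>t. ereal (\<phi> t)) \<and>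
     Liminf at_top (\<lambda>t. ereal (\<phi> t)) \<le> Limsup at_top (\<lambda>t. ereal (\<phi> t)) \<and>
     Limsup at_top (\<lambda>t. ereal (\<phi> t)) < \<infinity> \<and>
     (\<exists>t0::ereal.
        mono_on {t. ereal t < t0} \<phi> \<and>
        (\<forall>t1. t0 < t1 \<longrightarrow> \<not> mono_on {t. ereal t < t1} \<phi>) \<and>
        (\<forall>s. t0 = ereal s \<longrightarrow> \<phi> s > \<kappa>))"

definition wavefront ::
  "real \<Rightarrow> real \<Rightarrow> real \<Rightarrow> real \<Rightarrow> (real \<Rightarrow> real) \<Rightarrow> (real \<Rightarrow> real) \<Rightarrow> real \<Rightarrow> (real \<Rightarrow> real) \<Rightarrow> bool" where
  "wavefront m D r c d b \<kappa> \<phi> \<longleftrightarrow> semi_wavefront m D r c d b \<kappa> \<phi> \<and> (\<phi> \<longlongrightarrow> \<kappa>) at_top"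

end

theory Submission
  imports Defs
begin

definition gf :: "nat \<Rightarrow> real \<Rightarrow> real" where
  "gf j x = (if x > 0 then (1/x)^j * exp (-1/x) else 0)"

lemma gf_lim: "((\<lambda>h. gf j h / h) \<longlongrightarrow> 0) (at (0::real))"
proof (rule filterlim_split_at)
  show "((\<lambda>h. gf j h / h) \<longlongrightarrow> 0) (at_left (0::real))"
  proof (rule tendsto_eventually)
    show "\<forall>\<^sub>F h in at_left (0::real). gf j h / h = 0"
      unfolding eventually_at_left_field by (rule exI[of _ "-1"]) (auto simp: gf_def)
  qed
  have "((\<lambda>y::real. y ^ (Suc j) / exp y) \<longlongrightarrow> 0) at_top" by (rule tendsto_power_div_exp_0)
  then have "((\<lambda>h. (inverse h) ^ (Suc j) / exp (inverse h)) \<longlongrightarrow> 0) (at_right (0::real))"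
    by (rule filterlim_compose) (rule filterlim_inverse_at_top_right)
  then show "((\<lambda>h. gf j h / h) \<longlongrightarrow> 0) (at_right (0::real))"
  proof (rule tendsto_cong[THEN iffD1, rotated])
    show "\<forall>\<^sub>F h in at_right (0::real). inverse h ^ Suc j / exp (inverse h) = gf j h / h"
      unfolding eventually_at_right_field
      by (rule exI[of _ 1]) (auto simp: gf_def exp_minus field_simps)
  qed
qed

lemma gf_deriv: "(gf j has_real_derivative (- real j * gf (j+1) x + gf (j+2) x)) (at x)"
proof -
  consider "x > 0" | "x < 0" | "x = 0" by linarith
  then show ?thesis
  proof cases
    case 1
    have d: "((\<lambda>x. (1/x)^j * exp (-1/x)) has_real_derivative
       - real j * gf (j+1) x + gf (j+2) x) (at x)"
    proof (cases j)
      case 0 then show ?thesis using 1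
        by (auto intro!: derivative_eq_intros simp: gf_def power2_eq_square field_simps)
    next
      case (Suc i) then show ?thesis using 1
        by (auto intro!: derivative_eq_intros simp: gf_def power2_eq_square field_simps)
           (metis Suc_pred not_gr0 power_Suc)
    qed
    show ?thesis
      by (rule has_field_derivative_transform_within_open[OF d, of "{0<..}"]) (use 1 in \<open>auto simp: gf_def\<close>)
  next
    case 2
    have z: "- real j * gf (j+1) x + gf (j+2) x = 0" using 2 by (simp add: gf_def)
    have "((\<lambda>x. 0) has_real_derivative 0) (at x)" by simp
    then show ?thesis unfolding z
      by (rule has_field_derivative_transform_within_open[of _ _ _ "{..<0}"]) (use 2 in \<open>auto simp: gf_def\<close>)
  next
    case 3
    have "(gf j has_real_derivative 0) (at 0)"
      unfolding DERIV_def using gf_lim[of j] by (simp add: gf_def)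
    then show ?thesis using 3 by (simp add: gf_def)
  qed
qed

definition sm :: "(nat \<Rightarrow> real \<Rightarrow> real) \<Rightarrow> bool" where
  "sm F \<longleftrightarrow> (\<forall>k t. (F k has_real_derivative F (Suc k) t) (at t))"

lemma sm_D: "sm F \<Longrightarrow> (F k has_real_derivative F (Suc k) t) (at t)"
  unfolding sm_def by blast

lemma sm_cont: "sm F \<Longrightarrow> continuous_on S (F k)"
  by (meson DERIV_isCont continuous_at_imp_continuous_on sm_D)

lemma sm_deriv: "sm F \<Longrightarrow> (deriv ^^ k) (F 0) = F k"
proof (induction k)
  case 0 then show ?case by simp
next
  case (Suc k)
  have "(deriv ^^ Suc k) (F 0) = deriv ((deriv ^^ k) (F 0))" by simp
  also have "\<dots> = deriv (F k)" using Suc by simp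
  also have "\<dots> = F (Suc k)" using sm_D[OF Suc.prems] by (intro ext DERIV_imp_deriv)
  finally show ?case .
qed

lemma sm_smooth: "sm F \<Longrightarrow> smooth_fun (F 0)"
  unfolding smooth_fun_def using sm_deriv sm_D real_differentiable_def by metis

lemma sm_shift: "sm F \<Longrightarrow> sm (\<lambda>k. F (Suc k))"
  unfolding sm_def by blast

lemma sm_lin: "sm F \<Longrightarrow> sm G \<Longrightarrow> sm (\<lambda>k t. a * F k t + b * G k t)"
  unfolding sm_def by (auto intro!: derivative_eq_intros)

lemma sm_affine: "sm F \<Longrightarrow> sm (\<lambda>k t. \<alpha>^k * F k (\<alpha> * t + \<beta>))"
  unfolding sm_def
proof (intro allI)
  fix k t assume "\<forall>k t. (F k has_real_derivative F (Suc k) t) (at t)"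
  then have d: "(F k has_real_derivative F (Suc k) (\<alpha> * t + \<beta>)) (at (\<alpha> * t + \<beta>))" by blast
  have "((\<lambda>t. F k (\<alpha> * t + \<beta>)) has_real_derivative F (Suc k) (\<alpha> * t + \<beta>) * \<alpha>) (at t)"
    by (rule DERIV_chain2[where f="F k" and g="\<lambda>t. \<alpha> * t + \<beta>", OF d]) (auto intro!: derivative_eq_intros)
  then show "((\<lambda>t. \<alpha> ^ k * F k (\<alpha> * t + \<beta>)) has_real_derivative \<alpha> ^ Suc k * F (Suc k) (\<alpha> * t + \<beta>)) (at t)"
    by (auto intro!: derivative_eq_intros simp: algebra_simps)
qed

definition EL :: "(real \<times> nat) list \<Rightarrow> real \<Rightarrow> real" where
  "EL L x = sum_list (map (\<lambda>(c,j). c * gf j x) L)"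
definition DL :: "(real \<times> nat) list \<Rightarrow> (real \<times> nat) list" where
  "DL L = concat (map (\<lambda>(c,j). [(- c * real j, j+1), (c, j+2)]) L)"

lemma EL_deriv: "(EL L has_real_derivative EL (DL L) x) (at x)"
proof (induction L)
  case Nil then show ?case by (simp add: EL_def DL_def)
next
  case (Cons a L)
  obtain c j where a: "a = (c,j)" by (cases a)
  have e1: "EL (a # L) = (\<lambda>x. c * gf j x + EL L x)" by (auto simp: EL_def a)
  have e2: "EL (DL (a # L)) x = c * (- real j * gf (j+1) x + gf (j+2) x) + EL (DL L) x"
    by (simp add: EL_def DL_def a algebra_simps)
  show ?case unfolding e1 e2
    by (intro derivative_intros DERIV_cmult gf_deriv Cons.IH)
qed

definition Fg :: "nat \<Rightarrow> real \<Rightarrow> real" where "Fg k = EL ((DL ^^ k) [(1,0)])"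

lemma sm_Fg: "sm Fg"
  unfolding sm_def Fg_def by (simp add: EL_deriv)

lemma Fg0: "Fg 0 = gf 0"
  by (auto simp: Fg_def EL_def)

definition PL :: "(nat \<Rightarrow> real \<Rightarrow> real) \<Rightarrow> (nat \<Rightarrow> real \<Rightarrow> real) \<Rightarrow> (real \<times> nat \<times> nat) list \<Rightarrow> real \<Rightarrow> real" where
  "PL F G L t = sum_list (map (\<lambda>(c,i,j). c * F i t * G j t) L)"
definition PD :: "(real \<times> nat \<times> nat) list \<Rightarrow> (real \<times> nat \<times> nat) list" where
  "PD L = concat (map (\<lambda>(c,i,j). [(c, Suc i, j), (c, i, Suc j)]) L)"

lemma PL_deriv: assumes "sm F" "sm G" shows "(PL F G L has_real_derivative PL F G (PD L) x) (at x)"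
proof (induction L)
  case Nil then show ?case by (simp add: PL_def PD_def)
next
  case (Cons a L)
  obtain c i j where a: "a = (c,i,j)" by (cases a)
  have e1: "PL F G (a # L) = (\<lambda>x. c * F i x * G j x + PL F G L x)" by (auto simp: PL_def a)
  have e2: "PL F G (PD (a # L)) x = (c * F (Suc i) x * G j x + c * F i x * G (Suc j) x) + PL F G (PD L) x"
    by (simp add: PL_def PD_def a algebra_simps)
  show ?case unfolding e1 e2
    by (rule derivative_eq_intros sm_D[OF assms(1)] sm_D[OF assms(2)] Cons.IH refl | simp add: algebra_simps)+
qed

lemma sm_mult: assumes "sm F" "sm G"
  shows "sm (\<lambda>k. PL F G ((PD ^^ k) [(1,0,0)]))" "PL F G ((PD ^^ 0) [(1,0,0)]) = (\<lambda>t. F 0 t * G 0 t)"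
  using PL_deriv[OF assms] by (auto simp: sm_def PL_def)

lemma supp_integrable:
  fixes f :: "real \<Rightarrow> real"
  assumes "continuous_on UNIV f" "\<And>t. t \<notin> {a..b} \<Longrightarrow> f t = 0"
  shows "integrable lborel f" "(LINT t|lborel. f t) = integral {a..b} f"
proof -
  have e: "f = (\<lambda>x. indicator {a..b} x *\<^sub>R f x)"
    using assms(2) by (auto simp: indicator_def fun_eq_iff)
  have i: "integrable lborel (\<lambda>x. indicator {a..b} x *\<^sub>R f x)"
    by (rule borel_integrable_compact) (auto intro: continuous_on_subset[OF assms(1)])
  then show "integrable lborel f" using e by simp
  have si: "set_integrable lborel {a..b} f" using i by (simp add: set_integrable_def)
  have "(LINT t|lborel. f t) = (LINT x:{a..b}|lborel. f x)"
    by (subst e) (simp add: set_lebesgue_integral_def)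
  also have "\<dots> = integral {a..b} f" by (rule set_borel_integral_eq_integral(2)[OF si])
  finally show "(LINT t|lborel. f t) = integral {a..b} f" .
qed

lemma integral_pos:
  fixes f :: "real \<Rightarrow> real"
  assumes "continuous_on {a..b} f" "\<And>t. t \<in> {a..b} \<Longrightarrow> f t \<ge> 0" "a < t0" "t0 < b" "f t0 > 0"
  shows "integral {a..b} f > 0"
proof -
  have "isCont f t0"
    using assms(1,3,4) by (metis at_within_Icc_at continuous_on_eq_continuous_within greaterThanLessThan_iff
        continuous_within interior_atLeastAtMost_real interior_subset subsetD atLeastAtMost_iff less_imp_le)
  then obtain \<delta> where \<delta>: "\<delta> > 0" "\<And>t. \<bar>t - t0\<bar> < \<delta> \<Longrightarrow> \<bar>f t - f t0\<bar> < f t0 / 2"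
    using assms(5) unfolding continuous_at_eps_delta dist_real_def
    by (metis half_gt_zero_iff)
  define e where "e = min (\<delta>/2) (min ((t0 - a)/2) ((b - t0)/2))"
  have e1: "e \<le> (t0-a)/2" "e \<le> (b-t0)/2" "e \<le> \<delta>/2" unfolding e_def by linarith+
  have e: "e > 0" "e < \<delta>" "a \<le> t0 - e" "t0 + e \<le> b"
    using \<delta> assms(3,4) e1 by (auto simp: e_def)
  have sub: "{t0 - e..t0 + e} \<subseteq> {a..b}" using e by auto
  have int: "f integrable_on {a..b}" by (rule integrable_continuous_real[OF assms(1)])
  have int2: "f integrable_on {t0-e..t0+e}" by (rule integrable_on_subinterval[OF int sub])
  have "integral {t0-e..t0+e} (\<lambda>t. f t0 / 2) \<le> integral {t0-e..t0+e} f"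
  proof (rule integral_le)
    show "(\<lambda>t. f t0 / 2) integrable_on {t0-e..t0+e}" by (rule integrable_const_ivl)
    show "f integrable_on {t0-e..t0+e}" by (rule int2)
    fix t assume "t \<in> {t0-e..t0+e}"
    then have "\<bar>t - t0\<bar> < \<delta>" using e by auto
    from \<delta>(2)[OF this] show "f t0 / 2 \<le> f t" by linarith
  qed
  moreover have "integral {t0-e..t0+e} (\<lambda>t. f t0 / 2) = 2 * e * (f t0 / 2)"
    using e by simp
  moreover have "integral {t0-e..t0+e} f \<le> integral {a..b} f"
    by (rule integral_subset_le[OF sub int2 int]) (use assms(2) in auto)
  moreover have "2 * e * (f t0 / 2) > 0" using e assms(5) by simp
  ultimately show ?thesis by linarith
qed

lemma ibp:
  fixes P p Q q :: "real \<Rightarrow> real"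
  assumes "\<And>x. (P has_real_derivative p x) (at x)" "\<And>x. (Q has_real_derivative q x) (at x)"
    "continuous_on UNIV p" "continuous_on UNIV q"
    "\<And>t. t \<notin> {a..b} \<Longrightarrow> Q t = 0" "\<And>t. t \<notin> {a..b} \<Longrightarrow> q t = 0" "a \<le> b"
  shows "(LINT t|lborel. p t * Q t) = - (LINT t|lborel. P t * q t)"
proof -
  have cP: "continuous_on UNIV P" using assms(1)
    by (meson DERIV_isCont continuous_at_imp_continuous_on)
  have cQ: "continuous_on UNIV Q" using assms(2)
    by (meson DERIV_isCont continuous_at_imp_continuous_on)
  have c1: "continuous_on UNIV (\<lambda>t. p t * Q t)" by (intro continuous_intros assms cQ)
  have c2: "continuous_on UNIV (\<lambda>t. P t * q t)" by (intro continuous_intros assms cP)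
  have L1: "(LINT t|lborel. p t * Q t) = integral {a-1..b+1} (\<lambda>t. p t * Q t)"
    by (rule supp_integrable(2)[OF c1]) (use assms(5) in auto)
  have L2: "(LINT t|lborel. P t * q t) = integral {a-1..b+1} (\<lambda>t. P t * q t)"
    by (rule supp_integrable(2)[OF c2]) (use assms(6) in auto)
  have ftc: "((\<lambda>t. p t * Q t + P t * q t) has_integral (P (b+1) * Q (b+1) - P (a-1) * Q (a-1))) {a-1..b+1}"
  proof (rule fundamental_theorem_of_calculus)
    show "a - 1 \<le> b + 1" using assms(7) by auto
    fix x assume "x \<in> {a-1..b+1}"
    have "((\<lambda>t. P t * Q t) has_real_derivative (p x * Q x + P x * q x)) (at x)"
      by (rule derivative_eq_intros assms refl | simp)+
    then show "((\<lambda>t. P t * Q t) has_vector_derivative p x * Q x + P x * q x) (at x within {a-1..b+1})"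
      by (simp add: has_real_derivative_iff_has_vector_derivative[symmetric] has_field_derivative_at_within)
  qed
  have z: "P (b+1) * Q (b+1) - P (a-1) * Q (a-1) = 0" using assms(5) by auto
  have "integral {a-1..b+1} (\<lambda>t. p t * Q t + P t * q t) = 0" using ftc z by (simp add: integral_unique)
  moreover have "integral {a-1..b+1} (\<lambda>t. p t * Q t + P t * q t)
     = integral {a-1..b+1} (\<lambda>t. p t * Q t) + integral {a-1..b+1} (\<lambda>t. P t * q t)"
    by (rule integral_add; rule integrable_continuous_real; intro continuous_on_subset[OF c1] continuous_on_subset[OF c2]; simp)
  ultimately show ?thesis using L1 L2 by linarith
qed

lemma sm_supp:
  assumes "sm F" "\<And>t. t \<notin> {a..b} \<Longrightarrow> F 0 t = 0" "t \<notin> {a..b}"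
  shows "F k t = 0"
  using assms(3)
proof (induction k arbitrary: t)
  case 0 then show ?case using assms(2) by simp
next
  case (Suc k)
  have "((\<lambda>x. 0) has_real_derivative 0) (at t)" by simp
  then have "(F k has_real_derivative 0) (at t)"
    by (rule has_field_derivative_transform_within_open[of _ _ _ "- {a..b}"])
       (use Suc in auto)
  with sm_D[OF assms(1)] show ?case using DERIV_unique by blast
qed

definition tfam :: "(nat \<Rightarrow> real \<Rightarrow> real) \<Rightarrow> bool" where
  "tfam F \<longleftrightarrow> sm F \<and> (\<exists>a b. a \<le> b \<and> (\<forall>t. t \<notin> {a..b} \<longrightarrow> F 0 t = 0))"

lemma tfam_supp: assumes "tfam F" obtains a b where "a \<le> b" "\<And>k t. t \<notin> {a..b} \<Longrightarrow> F k t = 0"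
  using assms sm_supp unfolding tfam_def by metis

lemma tfam_sm: "tfam F \<Longrightarrow> sm F" by (simp add: tfam_def)

lemma tfam_test: assumes "tfam F"
  shows "test_fun (F 0)" "deriv (F 0) = F 1" "deriv (deriv (F 0)) = F 2"
proof -
  have s: "sm F" using assms by (simp add: tfam_def)
  show "test_fun (F 0)" unfolding test_fun_def
    using sm_smooth[OF s] assms unfolding tfam_def by (metis compact_Icc)
  show "deriv (F 0) = F 1" using sm_deriv[OF s, of 1] by simp
  show "deriv (deriv (F 0)) = F 2" using sm_deriv[OF s, of 2] by (simp add: numeral_2_eq_2)
qed

lemma tfam_lin: assumes "tfam F" "tfam G" shows "tfam (\<lambda>k t. x * F k t + y * G k t)"
proof -
  obtain a b where ab: "a \<le> b" "\<And>k t. t \<notin> {a..b} \<Longrightarrow> F k t = 0" using tfam_supp[OF assms(1)] by blast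
  obtain a' b' where ab': "a' \<le> b'" "\<And>k t. t \<notin> {a'..b'} \<Longrightarrow> G k t = 0" using tfam_supp[OF assms(2)] by blast
  show ?thesis unfolding tfam_def
  proof (intro conjI exI)
    show "sm (\<lambda>k t. x * F k t + y * G k t)" using assms by (intro sm_lin) (auto simp: tfam_def)
    show "min a a' \<le> max b b'" using ab ab' by auto
    show "\<forall>t. t \<notin> {min a a'..max b b'} \<longrightarrow> x * F 0 t + y * G 0 t = 0"
    proof (intro allI impI)
      fix t assume "t \<notin> {min a a'..max b b'}"
      then have "t \<notin> {a..b}" "t \<notin> {a'..b'}" by auto
      then show "x * F 0 t + y * G 0 t = 0" using ab(2) ab'(2) by simp
    qed
  qed
qed

lemma tfam_int: assumes "tfam F" "continuous_on UNIV f"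
  shows "integrable lborel (\<lambda>t. f t * F k t)"
proof -
  obtain a b where ab: "a \<le> b" "\<And>k t. t \<notin> {a..b} \<Longrightarrow> F k t = 0" using tfam_supp[OF assms(1)] by blast
  show ?thesis
    by (rule supp_integrable(1)[of _ a b]) (use ab assms sm_cont[OF tfam_sm[OF assms(1)]] in \<open>auto intro!: continuous_intros\<close>)
qed

lemma tfam_int1: assumes "tfam F" shows "integrable lborel (F k)"
  using tfam_int[OF assms, of "\<lambda>_. 1"] by simp

definition Bf :: "nat \<Rightarrow> real \<Rightarrow> real" where
  "Bf k = PL (\<lambda>k t. 1^k * Fg k (1 * t + 1)) (\<lambda>k t. (-1)^k * Fg k ((-1) * t + 1)) ((PD ^^ k) [(1,0,0)])"

lemma sm_Bf: "sm Bf"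
  unfolding Bf_def by (intro sm_mult sm_affine sm_Fg)

lemma Bf0: "Bf 0 t = gf 0 (t + 1) * gf 0 (1 - t)"
  unfolding Bf_def using sm_mult(2)[OF sm_affine[OF sm_Fg] sm_affine[OF sm_Fg], of 1 1 "-1" 1]
  by (simp add: Fg0 fun_eq_iff algebra_simps)

lemma Bf0_nonneg: "Bf 0 t \<ge> 0" by (simp add: Bf0 gf_def)
lemma Bf0_supp: "t \<notin> {-1..1} \<Longrightarrow> Bf 0 t = 0" by (auto simp: Bf0 gf_def)
lemma Bf0_pos: "Bf 0 0 > 0" by (simp add: Bf0 gf_def)

lemma tfam_Bf: "tfam Bf"
  unfolding tfam_def using sm_Bf Bf0_supp by (intro conjI exI[of _ "-1"] exI[of _ 1]) auto

definition Sb :: "real \<Rightarrow> real \<Rightarrow> nat \<Rightarrow> real \<Rightarrow> real" where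
  "Sb t0 \<delta> k t = (1/\<delta>)^k * Bf k ((1/\<delta>) * t + (- t0/\<delta>))"

lemma Sb_props: assumes "\<delta> > 0"
  shows "tfam (Sb t0 \<delta>)" "\<And>t. Sb t0 \<delta> 0 t \<ge> 0" "Sb t0 \<delta> 0 t0 > 0"
    "\<And>t. t \<notin> {t0-\<delta>..t0+\<delta>} \<Longrightarrow> Sb t0 \<delta> 0 t = 0"
proof -
  have supp: "Sb t0 \<delta> 0 t = 0" if "t \<notin> {t0-\<delta>..t0+\<delta>}" for t
  proof -
    have "(1/\<delta>) * t + (- t0/\<delta>) = (t - t0)/\<delta>" by (simp add: diff_divide_distrib)
    moreover have "(t - t0)/\<delta> \<notin> {-1..1}" using that assms by (auto simp: field_simps)
    ultimately show ?thesis by (simp add: Sb_def Bf0_supp)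
  qed
  then show "\<And>t. t \<notin> {t0-\<delta>..t0+\<delta>} \<Longrightarrow> Sb t0 \<delta> 0 t = 0" .
  show "tfam (Sb t0 \<delta>)" unfolding tfam_def
  proof (intro conjI exI)
    show "sm (Sb t0 \<delta>)" unfolding Sb_def[abs_def] by (intro sm_affine sm_Bf)
    show "t0 - \<delta> \<le> t0 + \<delta>" using assms by simp
  qed (use supp in auto)
  show "\<And>t. Sb t0 \<delta> 0 t \<ge> 0" by (simp add: Sb_def Bf0_nonneg)
  show "Sb t0 \<delta> 0 t0 > 0" using Bf0_pos by (simp add: Sb_def)
qed

lemma primitive:
  fixes f :: "real \<Rightarrow> real"
  assumes "continuous_on UNIV f"
  obtains G where "\<And>x. (G has_real_derivative f x) (at x)"
proof -
  define G where "G t = integral {0..t} f - integral {t..0} f" for t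
  have "(G has_real_derivative f x) (at x)" for x
  proof -
    define L where "L = min x 0 - 1"
    define U where "U = max x 0 + 1"
    have eq: "G t = integral {L..t} f - integral {L..0} f" if "t > L" for t
    proof (cases "t \<ge> 0")
      case True
      have i: "f integrable_on {L..t}" by (intro integrable_continuous_real continuous_on_subset[OF assms]) simp
      have "integral {L..0} f + integral {0..t} f = integral {L..t} f"
        using Henstock_Kurzweil_Integration.integral_combine[where a=L and c=0 and b=t and f=f, OF _ _ i] True L_def by simp
      moreover have "integral {t..0} f = 0" using True
        by (cases "t = 0") auto
      ultimately show ?thesis by (simp add: G_def)
    next
      case False
      have i: "f integrable_on {L..0}" by (intro integrable_continuous_real continuous_on_subset[OF assms]) simp
      have "integral {L..t} f + integral {t..0} f = integral {L..0} f"
        using Henstock_Kurzweil_Integration.integral_combine[where a=L and c=t and b=0 and f=f, OF _ _ i] False that by simp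
      moreover have "integral {0..t} f = 0" using False by auto
      ultimately show ?thesis by (simp add: G_def)
    qed
    have "((\<lambda>t. integral {L..t} f) has_real_derivative f x) (at x within {L..U})"
      by (rule integral_has_real_derivative) (auto simp: L_def U_def intro: continuous_on_subset[OF assms])
    then have "((\<lambda>t. integral {L..t} f) has_real_derivative f x) (at x)"
      by (simp add: at_within_Icc_at L_def U_def)
    then have "((\<lambda>t. integral {L..t} f - integral {L..0} f) has_real_derivative f x) (at x)"
      by (auto intro!: derivative_eq_intros)
    then show ?thesis
      by (rule has_field_derivative_transform_within_open[of _ _ _ "{L<..}"]) (auto simp: L_def eq)
  qed
  then show ?thesis using that by blast
qed

lemma deriv_zero_const:
  fixes G :: "real \<Rightarrow> real"
  assumes "\<And>x. (G has_real_derivative g x) (at x)" "\<And>x. min s t < x \<Longrightarrow> x < max s t \<Longrightarrow> g x = 0"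
  shows "G s = G t"
proof (cases "s = t")
  case False
  consider "s < t" | "t < s" using False by linarith
  then show ?thesis
  proof cases
    case 1
    obtain z where "z > s" "z < t" "G t - G s = (t - s) * g z"
      using MVT2[OF 1, of G g] assms(1) by blast
    moreover have "g z = 0" using assms(2)[of z] \<open>z > s\<close> \<open>z < t\<close> 1 by auto
    ultimately show ?thesis by simp
  next
    case 2
    obtain z where "z > t" "z < s" "G s - G t = (s - t) * g z"
      using MVT2[OF 2, of G g] assms(1) by blast
    moreover have "g z = 0" using assms(2)[of z] \<open>z > t\<close> \<open>z < s\<close> 2 by auto
    ultimately show ?thesis by simp
  qed
qed simp

lemma tfam_anti:
  assumes "tfam X" "(LINT t|lborel. X 0 t) = 0"
  obtains Y where "tfam Y" "\<And>k. Y (Suc k) = X k"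
proof -
  have s: "sm X" using assms tfam_sm by blast
  obtain a b where ab: "a \<le> b" "\<And>k t. t \<notin> {a..b} \<Longrightarrow> X k t = 0" using tfam_supp[OF assms(1)] by blast
  obtain G where G: "\<And>x. (G has_real_derivative X 0 x) (at x)"
    using primitive[OF sm_cont[OF s]] by blast
  define Y where "Y k = (case k of 0 \<Rightarrow> (\<lambda>t. G t - G a) | Suc j \<Rightarrow> X j)" for k
  have sY: "sm Y" unfolding sm_def
  proof (intro allI)
    fix k t show "(Y k has_real_derivative Y (Suc k) t) (at t)"
    proof (cases k)
      case 0 then show ?thesis using G by (auto simp: Y_def intro!: derivative_eq_intros)
    next
      case (Suc j) then show ?thesis using sm_D[OF s] by (simp add: Y_def)
    qed
  qed
  have int0: "integral {a..b} (X 0) = 0"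
    using supp_integrable(2)[OF sm_cont[OF s], of a b 0] ab assms(2) by simp
  have Gab: "G b - G a = 0"
  proof -
    have "(X 0 has_integral (G b - G a)) {a..b}"
      by (rule fundamental_theorem_of_calculus[OF ab(1)])
         (use G in \<open>auto simp: has_real_derivative_iff_has_vector_derivative[symmetric] intro: has_field_derivative_at_within\<close>)
    then show ?thesis using int0 integral_unique by metis
  qed
  have supp: "Y 0 t = 0" if "t \<notin> {a..b}" for t
  proof (cases "t < a")
    case True
    have "G t = G a"
      by (rule deriv_zero_const[OF G]) (use ab(2) True in auto)
    then show ?thesis by (simp add: Y_def)
  next
    case False
    then have "t > b" using that by auto
    have "G t = G b"
      by (rule deriv_zero_const[OF G]) (use ab(2) \<open>t > b\<close> in auto)
    then show ?thesis using Gab by (simp add: Y_def)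
  qed
  have "tfam Y" unfolding tfam_def using sY supp ab(1) by blast
  moreover have "\<And>k. Y (Suc k) = X k" by (simp add: Y_def)
  ultimately show ?thesis using that by blast
qed

lemma fundamental_pos:
  assumes "continuous_on UNIV f" "\<And>X. tfam X \<Longrightarrow> (LINT t|lborel. f t * X 0 t) = 0"
  shows "\<not> f t0 > 0"
proof
  assume pos: "f t0 > 0"
  have "isCont f t0" using assms(1) by (simp add: continuous_on_eq_continuous_at)
  then obtain \<delta> where \<delta>: "\<delta> > 0" "\<And>t. \<bar>t - t0\<bar> < \<delta> \<Longrightarrow> \<bar>f t - f t0\<bar> < f t0"
    using pos unfolding continuous_at_eps_delta dist_real_def by metis
  define e where "e = \<delta>/2"
  have e: "e > 0" "e < \<delta>" using \<delta> by (auto simp: e_def)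
  have S1: "tfam (Sb t0 e)" by (rule Sb_props[OF e(1)])
  have S2: "\<And>t. Sb t0 e 0 t \<ge> 0" by (rule Sb_props[OF e(1)])
  have S3: "Sb t0 e 0 t0 > 0" by (rule Sb_props[OF e(1)])
  have S4: "\<And>t. t \<notin> {t0-e..t0+e} \<Longrightarrow> Sb t0 e 0 t = 0" by (rule Sb_props[OF e(1)])
  have c: "continuous_on UNIV (\<lambda>t. f t * Sb t0 e 0 t)"
    by (intro continuous_intros assms(1) sm_cont[OF tfam_sm[OF S1]])
  have "(LINT t|lborel. f t * Sb t0 e 0 t) = integral {t0-e..t0+e} (\<lambda>t. f t * Sb t0 e 0 t)"
    by (rule supp_integrable(2)[OF c]) (use S4 in auto)
  also have "\<dots> > 0"
  proof (rule integral_pos[of _ _ _ t0])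
    show "continuous_on {t0-e..t0+e} (\<lambda>t. f t * Sb t0 e 0 t)" using c continuous_on_subset by blast
    fix t assume "t \<in> {t0-e..t0+e}"
    then have "\<bar>t - t0\<bar> < \<delta>" using e by auto
    then have "f t > 0" using \<delta>(2) by fastforce
    then show "f t * Sb t0 e 0 t \<ge> 0" using S2 by simp
  qed (use e pos S3 in auto)
  finally show False using assms(2)[OF S1] by simp
qed

lemma fundamental:
  assumes "continuous_on UNIV f" "\<And>X. tfam X \<Longrightarrow> (LINT t|lborel. f t * X 0 t) = 0"
  shows "f t0 = 0"
proof -
  have "\<not> f t0 > 0" using fundamental_pos[of f t0] assms by blast
  moreover have "\<not> - f t0 > 0"
  proof -
    have c: "continuous_on UNIV (\<lambda>t. - f t)" by (intro continuous_intros assms)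
    have "(LINT t|lborel. - f t * X 0 t) = 0" if "tfam X" for X using assms(2)[OF that] by simp
    then show ?thesis using fundamental_pos[of "\<lambda>t. - f t" t0] c by blast
  qed
  ultimately show ?thesis by simp
qed

definition I0 :: real where "I0 = (LINT t|lborel. Bf 0 t)"

lemma I0_pos: "I0 > 0"
proof -
  have c: "continuous_on UNIV (Bf 0)" by (rule sm_cont[OF sm_Bf])
  have "I0 = integral {-1..1} (Bf 0)" unfolding I0_def
    by (rule supp_integrable(2)[OF c]) (use Bf0_supp in auto)
  also have "\<dots> > 0"
    by (rule integral_pos[of _ _ _ 0]) (use c Bf0_nonneg Bf0_pos in \<open>auto intro: continuous_on_subset\<close>)
  finally show ?thesis .
qed

definition P0 :: "nat \<Rightarrow> real \<Rightarrow> real" where "P0 k t = (1/I0) * Bf k t"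

lemma tfam_P0: "tfam P0"
  using tfam_lin[OF tfam_Bf tfam_Bf, of "1/I0" 0] by (simp add: P0_def[abs_def])

lemma int_P0: "(LINT t|lborel. P0 0 t) = 1"
  using I0_pos by (simp add: P0_def I0_def)

lemma decomp:
  assumes "tfam X"
  obtains Y where "tfam Y" "\<And>k t. Y (Suc k) t = X k t - (LINT t|lborel. X 0 t) * P0 k t"
proof -
  define c where "c = (LINT t|lborel. X 0 t)"
  define \<eta> where "\<eta> k t = 1 * X k t + (- c) * P0 k t" for k t
  have t: "tfam \<eta>" unfolding \<eta>_def[abs_def] by (rule tfam_lin[OF assms tfam_P0])
  have "(LINT t|lborel. \<eta> 0 t) = c - c * (LINT t|lborel. P0 0 t)"
    unfolding \<eta>_def c_def using tfam_int1[OF assms, of 0] tfam_int1[OF tfam_P0, of 0] by simp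
  then have "(LINT t|lborel. \<eta> 0 t) = 0" using int_P0 by simp
  then obtain Y where "tfam Y" "\<And>k. Y (Suc k) = \<eta> k" using tfam_anti[OF t] by blast
  then show ?thesis using that by (simp add: \<eta>_def c_def)
qed

lemma affine:
  fixes g :: "real \<Rightarrow> real"
  assumes gc: "continuous_on UNIV g" and H: "\<And>X. tfam X \<Longrightarrow> (LINT t|lborel. g t * X 2 t) = 0"
  obtains \<alpha> \<beta> where "\<And>t. g t = \<alpha> + \<beta> * t"
proof -
  define K where "K = (LINT t|lborel. g t * P0 1 t)"
  have step2: "(LINT t|lborel. g t * X 1 t) = (LINT t|lborel. X 0 t) * K" if X: "tfam X" for X
  proof -
    define c where "c = (LINT t|lborel. X 0 t)"
    obtain Y where Y: "tfam Y" "\<And>k t. Y (Suc k) t = X k t - c * P0 k t"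
      using decomp[OF X] c_def by blast
    have "0 = (LINT t|lborel. g t * Y 2 t)" using H[OF Y(1)] by simp
    also have "\<dots> = (LINT t|lborel. g t * X 1 t - c * (g t * P0 1 t))"
      by (simp add: Y(2) numeral_2_eq_2 algebra_simps)
    also have "\<dots> = (LINT t|lborel. g t * X 1 t) - c * K"
      using tfam_int[OF X gc, of 1] tfam_int[OF tfam_P0 gc, of 1] by (simp add: K_def)
    finally show ?thesis by (simp add: c_def)
  qed
  define g1 where "g1 t = g t + K * t" for t
  have g1c: "continuous_on UNIV g1" unfolding g1_def by (intro continuous_intros gc)
  have step3: "(LINT t|lborel. g1 t * X 1 t) = 0" if X: "tfam X" for X
  proof -
    obtain a b where ab: "a \<le> b" "\<And>k t. t \<notin> {a..b} \<Longrightarrow> X k t = 0" using tfam_supp[OF X] by blast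
    have ib: "(LINT t|lborel. 1 * X 0 t) = - (LINT t|lborel. t * X 1 t)"
      by (rule ibp[where a=a and b=b]) (use ab sm_D[OF tfam_sm[OF X]] sm_cont[OF tfam_sm[OF X]] in \<open>auto intro!: derivative_eq_intros\<close>)
    have "(LINT t|lborel. g1 t * X 1 t) = (LINT t|lborel. g t * X 1 t + K * (t * X 1 t))"
      by (simp add: g1_def algebra_simps)
    also have "\<dots> = (LINT t|lborel. g t * X 1 t) + K * (LINT t|lborel. t * X 1 t)"
      using tfam_int[OF X gc, of 1] tfam_int[OF X continuous_on_id, of 1] by simp
    also have "\<dots> = 0" using step2[OF X] ib by simp
    finally show ?thesis .
  qed
  define C where "C = (LINT t|lborel. g1 t * P0 0 t)"
  have step4: "(LINT t|lborel. (g1 t - C) * X 0 t) = 0" if X: "tfam X" for X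
  proof -
    define c where "c = (LINT t|lborel. X 0 t)"
    obtain Y where Y: "tfam Y" "\<And>k t. Y (Suc k) t = X k t - c * P0 k t"
      using decomp[OF X] c_def by blast
    have "0 = (LINT t|lborel. g1 t * Y 1 t)" using step3[OF Y(1)] by simp
    also have "\<dots> = (LINT t|lborel. g1 t * X 0 t - c * (g1 t * P0 0 t))"
      by (simp add: Y(2) algebra_simps)
    also have "\<dots> = (LINT t|lborel. g1 t * X 0 t) - c * C"
      using tfam_int[OF X g1c, of 0] tfam_int[OF tfam_P0 g1c, of 0] by (simp add: C_def)
    finally have e: "(LINT t|lborel. g1 t * X 0 t) = c * C" by simp
    have "(LINT t|lborel. (g1 t - C) * X 0 t) = (LINT t|lborel. g1 t * X 0 t - C * X 0 t)"
      by (simp add: algebra_simps)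
    also have "\<dots> = (LINT t|lborel. g1 t * X 0 t) - C * c"
      using tfam_int[OF X g1c, of 0] tfam_int1[OF X, of 0] by (simp add: c_def)
    finally show ?thesis using e by simp
  qed
  have z: "g1 t - C = 0" for t
    using fundamental[of "\<lambda>t. g1 t - C" t] step4 g1c continuous_on_diff[OF g1c continuous_on_const] by blast
  have "g t = C + (- K) * t" for t
  proof -
    have "g t + K * t - C = 0" using z[of t] unfolding g1_def .
    then show ?thesis by simp
  qed
  then show ?thesis using that by blast
qed

lemma regularity:
  fixes \<phi> h u :: "real \<Rightarrow> real"
  assumes D: "D > 0" and uc: "continuous_on UNIV u" and \<phi>c: "continuous_on UNIV \<phi>"
    and hc: "continuous_on UNIV h"
    and eq: "\<And>X. tfam X \<Longrightarrow> - c * (LINT t|lborel. \<phi> t * X 1 t)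
              = D * (LINT t|lborel. u t * X 2 t) - (LINT t|lborel. h t * X 0 t)"
  obtains v w where "\<And>t. (u has_real_derivative v t) (at t)" "\<And>t. (w has_real_derivative h t) (at t)"
    "\<And>t. D * v t = w t + c * \<phi> t"
proof -
  obtain H where H: "\<And>x. (H has_real_derivative h x) (at x)" using primitive[OF hc] by blast
  have Hc: "continuous_on UNIV H" using H by (meson DERIV_isCont continuous_at_imp_continuous_on)
  define p where "p t = (c * \<phi> t + H t) / D" for t
  have pc: "continuous_on UNIV p" unfolding p_def using D by (intro continuous_intros \<phi>c Hc) auto
  obtain P where P: "\<And>x. (P has_real_derivative p x) (at x)" using primitive[OF pc] by blast
  have Pc: "continuous_on UNIV P" using P by (meson DERIV_isCont continuous_at_imp_continuous_on)
  have key: "(LINT t|lborel. (u t - P t) * X 2 t) = 0" if X: "tfam X" for X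
  proof -
    obtain a b where ab: "a \<le> b" "\<And>k t. t \<notin> {a..b} \<Longrightarrow> X k t = 0" using tfam_supp[OF X] by blast
    note sX = tfam_sm[OF X]
    have i1: "(LINT t|lborel. h t * X 0 t) = - (LINT t|lborel. H t * X 1 t)"
      by (rule ibp[where a=a and b=b]) (use ab H sm_D[OF sX] sm_cont[OF sX] hc in auto)
    have i2: "(LINT t|lborel. p t * X 1 t) = - (LINT t|lborel. P t * X 2 t)"
      by (rule ibp[where a=a and b=b]) (use ab P sm_D[OF sX] sm_cont[OF sX] pc in \<open>auto simp: numeral_2_eq_2\<close>)
    have "(LINT t|lborel. p t * X 1 t) = (LINT t|lborel. (c/D) * (\<phi> t * X 1 t) + (1/D) * (H t * X 1 t))"
      by (simp add: p_def algebra_simps add_divide_distrib)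
    also have "\<dots> = (c/D) * (LINT t|lborel. \<phi> t * X 1 t) + (1/D) * (LINT t|lborel. H t * X 1 t)"
      using tfam_int[OF X \<phi>c, of 1] tfam_int[OF X Hc, of 1] by simp
    finally have e1: "D * (LINT t|lborel. p t * X 1 t) = c * (LINT t|lborel. \<phi> t * X 1 t) + (LINT t|lborel. H t * X 1 t)"
      using D by (simp add: field_simps)
    have "(LINT t|lborel. (u t - P t) * X 2 t) = (LINT t|lborel. u t * X 2 t - P t * X 2 t)"
      by (simp add: algebra_simps)
    also have "\<dots> = (LINT t|lborel. u t * X 2 t) - (LINT t|lborel. P t * X 2 t)"
      using tfam_int[OF X uc, of 2] tfam_int[OF X Pc, of 2] by simp
    finally have e2: "(LINT t|lborel. (u t - P t) * X 2 t) = (LINT t|lborel. u t * X 2 t) - (LINT t|lborel. P t * X 2 t)" .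
    have e3: "- (D * (LINT t|lborel. P t * X 2 t)) = c * (LINT t|lborel. \<phi> t * X 1 t) + (LINT t|lborel. H t * X 1 t)"
      using e1 i2 by simp
    have "D * (LINT t|lborel. u t * X 2 t) = D * (LINT t|lborel. P t * X 2 t)"
      using eq[OF X] i1 e3 by linarith
    then show ?thesis using e2 D by simp
  qed
  have uPc: "continuous_on UNIV (\<lambda>t. u t - P t)" by (intro continuous_intros uc Pc)
  obtain \<alpha> \<beta> where ab: "\<And>t. u t - P t = \<alpha> + \<beta> * t"
    using affine[of "\<lambda>t. u t - P t"] uPc key by blast
  have ueq: "u = (\<lambda>t. P t + \<alpha> + \<beta> * t)" using ab by (auto simp: fun_eq_iff algebra_simps)
  define v where "v t = p t + \<beta>" for t
  define w where "w t = H t + D * \<beta>" for t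
  have "(u has_real_derivative v t) (at t)" for t
    unfolding ueq v_def using P[of t] by (auto intro!: derivative_eq_intros)
  moreover have "(w has_real_derivative h t) (at t)" for t
    unfolding w_def using H[of t] by (auto intro!: derivative_eq_intros)
  moreover have "D * v t = w t + c * \<phi> t" for t
    using D by (simp add: v_def w_def p_def field_simps)
  ultimately show ?thesis using that by blast
qed

lemma mvt_at:
  fixes f f' :: "real \<Rightarrow> real"
  assumes "\<And>t. (f has_real_derivative f' t) (at t)" "x < y"
  obtains z where "x < z" "z < y" "f y - f x = (y - x) * f' z"
  using MVT2[OF assms(2), of f f'] assms(1) by blast

lemma no_max:
  fixes \<phi> u v w h :: "real \<Rightarrow> real"
  assumes D: "D > 0" and c: "c > 0" and m: "m > 0" and \<phi>0: "\<And>t. \<phi> t \<ge> 0"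
    and u: "\<And>t. u t = \<phi> t powr m"
    and du: "\<And>t. (u has_real_derivative v t) (at t)"
    and dw: "\<And>t. (w has_real_derivative h t) (at t)"
    and vw: "\<And>t. D * v t = w t + c * \<phi> t"
    and hc: "isCont h s" and hs: "h s > 0" and ab: "a < s" "s < b"
    and mx: "\<And>t. a < t \<Longrightarrow> t < b \<Longrightarrow> \<phi> t \<le> \<phi> s"
  shows False
proof -
  have umono: "u t \<le> u s" if "a < t" "t < b" for t
    unfolding u using mx[OF that] \<phi>0 m by (intro powr_mono2) auto
  have vs: "v s = 0"
  proof (rule DERIV_local_max[OF du])
    show "0 < min (s - a) (b - s)" using ab by simp
    show "\<forall>y. \<bar>s - y\<bar> < min (s - a) (b - s) \<longrightarrow> u y \<le> u s"
      using umono by (auto simp: abs_if split: if_splits)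
  qed
  obtain \<delta> where \<delta>: "\<delta> > 0" "\<And>t. \<bar>t - s\<bar> < \<delta> \<Longrightarrow> \<bar>h t - h s\<bar> < h s"
    using hc hs unfolding continuous_at_eps_delta dist_real_def by metis
  define e where "e = min \<delta> (s - a)"
  have e: "e > 0" "e \<le> \<delta>" "e \<le> s - a" using \<delta> ab by (auto simp: e_def)
  have vneg: "v t < 0" if tt: "s - e < t" "t < s" for t
  proof -
    obtain z where z: "t < z" "z < s" "w s - w t = (s - t) * h z" using mvt_at[OF dw tt(2)] by blast
    have "\<bar>z - s\<bar> < \<delta>" using z tt e by auto
    then have "h z > 0" using \<delta>(2) by fastforce
    then have "w t < w s" using z tt by (smt (verit) mult_pos_pos)
    moreover have "\<phi> t \<le> \<phi> s" using mx tt e ab by auto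
    ultimately have "D * v t < D * v s" using vw[of t] vw[of s] c by (smt (verit) mult_left_mono)
    then show ?thesis using vs D by (simp add: mult_less_0_iff)
  qed
  define t1 where "t1 = s - e/2"
  have t1: "s - e < t1" "t1 < s" using e by (auto simp: t1_def)
  obtain z where z: "t1 < z" "z < s" "u s - u t1 = (s - t1) * v z" using mvt_at[OF du t1(2)] by blast
  have "v z < 0" using vneg z t1 by auto
  then have "u s < u t1" using z t1 by (smt (verit) mult_pos_neg)
  moreover have "u t1 \<le> u s" using umono[of t1] t1 e ab by linarith
  ultimately show False by simp
qed

lemma no_min:
  fixes \<phi> u v w h :: "real \<Rightarrow> real"
  assumes D: "D > 0" and c: "c > 0" and m: "m > 0" and \<phi>0: "\<And>t. \<phi> t \<ge> 0"
    and u: "\<And>t. u t = \<phi> t powr m"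
    and du: "\<And>t. (u has_real_derivative v t) (at t)"
    and dw: "\<And>t. (w has_real_derivative h t) (at t)"
    and vw: "\<And>t. D * v t = w t + c * \<phi> t"
    and hc: "isCont h s" and hs: "h s < 0" and ab: "a < s" "s < b"
    and mn: "\<And>t. a < t \<Longrightarrow> t < b \<Longrightarrow> \<phi> s \<le> \<phi> t"
  shows False
proof -
  have umono: "u s \<le> u t" if "a < t" "t < b" for t
    unfolding u using mn[OF that] \<phi>0 m by (intro powr_mono2) auto
  have vs: "v s = 0"
  proof (rule DERIV_local_min[OF du])
    show "0 < min (s - a) (b - s)" using ab by simp
    show "\<forall>y. \<bar>s - y\<bar> < min (s - a) (b - s) \<longrightarrow> u s \<le> u y"
      using umono by (auto simp: abs_if split: if_splits)
  qed
  obtain \<delta> where \<delta>: "\<delta> > 0" "\<And>t. \<bar>t - s\<bar> < \<delta> \<Longrightarrow> \<bar>h t - h s\<bar> < - h s"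
    using hc hs unfolding continuous_at_eps_delta dist_real_def by (metis neg_0_less_iff_less)
  define e where "e = min \<delta> (s - a)"
  have e: "e > 0" "e \<le> \<delta>" "e \<le> s - a" using \<delta> ab by (auto simp: e_def)
  have vpos: "v t > 0" if tt: "s - e < t" "t < s" for t
  proof -
    obtain z where z: "t < z" "z < s" "w s - w t = (s - t) * h z" using mvt_at[OF dw tt(2)] by blast
    have "\<bar>z - s\<bar> < \<delta>" using z tt e by auto
    then have "h z < 0" using \<delta>(2) by fastforce
    then have "w t > w s" using z tt by (smt (verit) mult_pos_neg)
    moreover have "\<phi> s \<le> \<phi> t" using mn tt e ab by auto
    ultimately have "D * v t > D * v s" using vw[of t] vw[of s] c by (smt (verit) mult_left_mono)
    then show ?thesis using vs D by (simp add: zero_less_mult_iff)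
  qed
  define t1 where "t1 = s - e/2"
  have t1: "s - e < t1" "t1 < s" using e by (auto simp: t1_def)
  obtain z where z: "t1 < z" "z < s" "u s - u t1 = (s - t1) * v z" using mvt_at[OF du t1(2)] by blast
  have "v z > 0" using vpos z t1 by auto
  then have "u s > u t1" using z t1 by (smt (verit) mult_pos_pos)
  moreover have "u s \<le> u t1" using umono[of t1] t1 e ab by linarith
  ultimately show False by simp
qed

lemma grow_contra:
  fixes u v w h :: "real \<Rightarrow> real"
  assumes D: "D > 0" and e: "\<epsilon> > 0"
    and du: "\<And>t. (u has_real_derivative v t) (at t)"
    and dw: "\<And>t. (w has_real_derivative h t) (at t)"
    and vw: "\<And>t. D * v t \<ge> w t + K"
    and hT: "\<And>t. t \<ge> T \<Longrightarrow> h t \<ge> \<epsilon>"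
    and M: "\<And>t. u t \<le> M"
  shows False
proof -
  have wg: "w t \<ge> w T + \<epsilon> * (t - T)" if "t \<ge> T" for t
  proof (cases "t = T")
    case False
    then have "T < t" using that by simp
    then obtain z where z: "T < z" "z < t" "w t - w T = (t - T) * h z" using mvt_at[OF dw] by blast
    have "h z \<ge> \<epsilon>" using hT z by simp
    then have "(t - T) * h z \<ge> (t - T) * \<epsilon>" using z by (intro mult_left_mono) auto
    then show ?thesis using z by (simp add: algebra_simps)
  qed simp
  define T1 where "T1 = max T (T + (D - w T - K) / \<epsilon>)"
  have v1: "v t \<ge> 1" if "t \<ge> T1" for t
  proof -
    have "t \<ge> T" "t - T \<ge> (D - w T - K) / \<epsilon>" using that by (auto simp: T1_def)
    then have "\<epsilon> * (t - T) \<ge> D - w T - K" using e by (simp add: field_simps)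
    then have "D * v t \<ge> D" using wg[OF \<open>t \<ge> T\<close>] vw[of t] by linarith
    then show ?thesis using D by simp
  qed
  define t2 where "t2 = T1 + (M - u T1 + 1)"
  have "M - u T1 + 1 > 0" using M[of T1] by simp
  then have "T1 < t2" by (simp add: t2_def)
  then obtain z where z: "T1 < z" "z < t2" "u t2 - u T1 = (t2 - T1) * v z" using mvt_at[OF du] by blast
  have "v z \<ge> 1" using v1 z by simp
  then have "(t2 - T1) * v z \<ge> (t2 - T1) * 1" using \<open>T1 < t2\<close> by (intro mult_left_mono) auto
  then have "u t2 \<ge> u T1 + (t2 - T1)" using z(3) by simp
  then have "u t2 > M" by (simp add: t2_def)
  then show False using M[of t2] by simp
qed

lemma freq_gt:
  fixes f :: "real \<Rightarrow> real"
  assumes "ereal l < Limsup at_top (\<lambda>t. ereal (f t))"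
  shows "\<exists>t>T. f t > l"
proof (rule ccontr)
  assume "\<not> (\<exists>t>T. f t > l)"
  then have "eventually (\<lambda>t. ereal (f t) \<le> ereal l) at_top"
    unfolding eventually_at_top_linorder
    by (intro exI[of _ "T+1"]) (smt (verit) ereal_less_eq(3))
  then have "Limsup at_top (\<lambda>t. ereal (f t)) \<le> ereal l" by (rule Limsup_bounded)
  then show False using assms by simp
qed

lemma freq_lt:
  fixes f :: "real \<Rightarrow> real"
  assumes "Liminf at_top (\<lambda>t. ereal (f t)) < ereal l"
  shows "\<exists>t>T. f t < l"
proof (rule ccontr)
  assume "\<not> (\<exists>t>T. f t < l)"
  then have "eventually (\<lambda>t. ereal l \<le> ereal (f t)) at_top"
    unfolding eventually_at_top_linorder
    by (intro exI[of _ "T+1"]) (smt (verit) ereal_less_eq(3))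
  then have "ereal l \<le> Liminf at_top (\<lambda>t. ereal (f t))" by (rule Liminf_bounded)
  then show False using assms by simp
qed

lemma ev_lt:
  fixes f :: "real \<Rightarrow> real"
  assumes "Limsup at_top (\<lambda>t. ereal (f t)) < ereal l"
  obtains T where "\<And>t. t \<ge> T \<Longrightarrow> f t < l"
proof -
  have "eventually (\<lambda>t. ereal (f t) < ereal l) at_top" by (rule Limsup_lessD[OF assms])
  then show ?thesis using that unfolding eventually_at_top_linorder by auto
qed

lemma ev_gt:
  fixes f :: "real \<Rightarrow> real"
  assumes "ereal l < Liminf at_top (\<lambda>t. ereal (f t))"
  obtains T where "\<And>t. t \<ge> T \<Longrightarrow> f t > l"
proof -
  have "eventually (\<lambda>t. ereal (f t) > ereal l) at_top" by (rule less_LiminfD[OF assms])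
  then show ?thesis using that unfolding eventually_at_top_linorder by auto
qed

lemma d_facts:
  fixes d d1 :: "real \<Rightarrow> real"
  assumes dd: "\<And>s. s \<ge> 0 \<Longrightarrow> (d has_real_derivative d1 s) (at s within {0..})"
    and pos: "\<And>s. s > 0 \<Longrightarrow> d1 s > 0"
  shows "continuous_on {0..} d" "\<And>x y. 0 \<le> x \<Longrightarrow> x < y \<Longrightarrow> d x < d y"
proof -
  show dc: "continuous_on {0..} d" by (rule DERIV_continuous_on) (use dd in auto)
  fix x y :: real assume xy: "0 \<le> x" "x < y"
  have "\<forall>z. x < z \<and> z < y \<longrightarrow> d differentiable (at z)"
  proof (intro allI impI)
    fix z assume "x < z \<and> z < y"
    then have "z > 0" using xy by auto
    then have "(d has_real_derivative d1 z) (at z)"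
      using dd[of z] at_within_interior[of z "{0..}"] by simp
    then show "d differentiable (at z)" using real_differentiable_def by blast
  qed
  moreover have "continuous_on {x..y} d" using continuous_on_subset[OF dc] xy by auto
  ultimately obtain l z where z: "x < z" "z < y" "(d has_real_derivative l) (at z)" "d y - d x = (y - x) * l"
    using MVT[OF xy(2)] by blast
  have "(d has_real_derivative d1 z) (at z)"
    using dd[of z] at_within_interior[of z "{0..}"] z xy by simp
  then have "l = d1 z" using z(3) DERIV_unique by blast
  then have "l > 0" using pos z xy by simp
  then show "d x < d y" using z xy by (smt (verit) mult_pos_pos)
qed

theorem lemma3p3:
  fixes m D r c \<zeta>1 \<zeta>2 \<kappa> b0 :: real
    and d d1 d2 b \<phi> :: "real \<Rightarrow> real"
  assumes m: "m > 1" and D: "D > 0" and r: "r \<ge> 0" and c: "c > 0"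
    and d_C2: "\<And>s. s \<ge> 0 \<Longrightarrow> (d has_real_derivative d1 s) (at s within {0..})"
              "\<And>s. s \<ge> 0 \<Longrightarrow> (d1 has_real_derivative d2 s) (at s within {0..})"
              "continuous_on {0..} d2"
    and d0: "d 0 = 0"
    and d1_pos: "\<And>s. s > 0 \<Longrightarrow> d1 s > 0"
    and d2_nonneg: "\<And>s. s > 0 \<Longrightarrow> d2 s \<ge> 0"
    and b_cont: "continuous_on {0..} b"
    and b_nonneg: "\<And>s. s \<ge> 0 \<Longrightarrow> b s \<ge> 0"
    and zeta: "0 < \<zeta>1" "\<zeta>1 < \<zeta>2"
    and H1a: "\<And>s. s \<in> {\<zeta>1..\<zeta>2} \<Longrightarrow> d \<zeta>1 \<le> b s \<and> b s \<le> d \<zeta>2"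
    and H1b: "\<And>s. s \<in> {0..\<zeta>1} \<Longrightarrow> 0 \<le> b s \<and> b s \<le> d \<zeta>2"
    and H2: "\<And>s. s \<in> {\<zeta>1..\<zeta>2} \<Longrightarrow> b \<zeta>1 \<le> b s"
    and H3a: "\<And>s. s \<in> {0<..\<zeta>1} \<Longrightarrow> b s > d s"
    and H3b: "(b has_real_derivative b0) (at 0 within {0..})" "b0 > d1 0"
    and H4: "{s \<in> {0..\<zeta>2}. b s = d s} = {0, \<kappa>}" "\<kappa> \<noteq> 0"
    and bsup: "\<And>s. s \<ge> 0 \<Longrightarrow> b s \<le> d \<zeta>2"
    and wave: "semi_wavefront m D r c d b \<kappa> \<phi> \<or> wavefront m D r c d b \<kappa> \<phi>"
  shows "0 < ereal \<zeta>1 \<and>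
         ereal \<zeta>1 \<le> Liminf at_top (\<lambda>t. ereal (\<phi> t)) \<and>
         Liminf at_top (\<lambda>t. ereal (\<phi> t)) \<le> Limsup at_top (\<lambda>t. ereal (\<phi> t)) \<and>
         Limsup at_top (\<lambda>t. ereal (\<phi> t)) \<le> ereal \<zeta>2 \<and>
         ereal \<zeta>2 < \<infinity>"
proof -
  have sw: "semi_wavefront m D r c d b \<kappa> \<phi>" using wave by (auto simp: wavefront_def)
  then have \<phi>0: "\<And>t. 0 \<le> \<phi> t" and \<phi>c: "continuous_on UNIV \<phi>" and bd: "bounded (range \<phi>)"
    and se: "solves_eq m D r c d b \<phi>" and Li0: "0 < Liminf at_top (\<lambda>t. ereal (\<phi> t))"
    and LiLs: "Liminf at_top (\<lambda>t. ereal (\<phi> t)) \<le> Limsup at_top (\<lambda>t. ereal (\<phi> t))"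
    unfolding semi_wavefront_def by auto
  obtain B0 where B0: "\<forall>x\<in>range \<phi>. \<bar>x\<bar> \<le> B0" using bd bounded_real by blast
  have B: "\<phi> t \<le> B0" for t
  proof -
    have "\<bar>\<phi> t\<bar> \<le> B0" using B0 by blast
    then show ?thesis by simp
  qed
  define B where "B = B0"
  have B: "\<And>t. \<phi> t \<le> B" using B by (simp add: B_def)
  note dF = d_facts[OF d_C2(1) d1_pos]
  have dc: "continuous_on {0..} d" by (rule dF(1))
  have dlt: "\<And>x y. 0 \<le> x \<Longrightarrow> x < y \<Longrightarrow> d x < d y" by (rule dF(2))
  have dle: "d x \<le> d y" if "0 \<le> x" "x \<le> y" for x y using dlt[of x y] that by (cases "x = y") auto
  have m0: "m > 0" using m by simp
  define u where "u t = \<phi> t powr m" for t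
  have uc: "continuous_on UNIV u" unfolding u_def[abs_def]
    by (rule continuous_on_powr') (use \<phi>c \<phi>0 m0 in auto)
  define h where "h t = d (\<phi> t) - b (\<phi> (t - c * r))" for t
  have dphic: "continuous_on UNIV (\<lambda>t. d (\<phi> t))"
    by (rule continuous_on_compose2[OF dc \<phi>c]) (use \<phi>0 in auto)
  have sc: "continuous_on UNIV (\<lambda>t. \<phi> (t - c * r))"
    by (rule continuous_on_compose2[OF \<phi>c]) (auto intro: continuous_intros)
  have bphic: "continuous_on UNIV (\<lambda>t. b (\<phi> (t - c * r)))"
    by (rule continuous_on_compose2[OF b_cont sc]) (use \<phi>0 in auto)
  have hc: "continuous_on UNIV h" unfolding h_def[abs_def] by (intro continuous_intros dphic bphic)
  have eq: "- c * (LINT t|lborel. \<phi> t * X 1 t)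
              = D * (LINT t|lborel. u t * X 2 t) - (LINT t|lborel. h t * X 0 t)" if X: "tfam X" for X
  proof -
    have e: "- c * (LINT t|lborel. \<phi> t * X 1 t)
        = D * (LINT t|lborel. (\<phi> t powr m) * X 2 t)
          - (LINT t|lborel. d (\<phi> t) * X 0 t)
          + (LINT t|lborel. b (\<phi> (t - c * r)) * X 0 t)"
      using se[unfolded solves_eq_def, rule_format, OF tfam_test(1)[OF X]] tfam_test(2,3)[OF X] by simp
    have "(LINT t|lborel. h t * X 0 t) = (LINT t|lborel. d (\<phi> t) * X 0 t - b (\<phi> (t - c * r)) * X 0 t)"
      by (simp add: h_def algebra_simps)
    also have "\<dots> = (LINT t|lborel. d (\<phi> t) * X 0 t) - (LINT t|lborel. b (\<phi> (t - c * r)) * X 0 t)"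
      using tfam_int[OF X dphic, of 0] tfam_int[OF X bphic, of 0] by simp
    finally show ?thesis using e by (simp add: u_def)
  qed
  obtain v w where du: "\<And>t. (u has_real_derivative v t) (at t)" and dw: "\<And>t. (w has_real_derivative h t) (at t)"
    and vw: "\<And>t. D * v t = w t + c * \<phi> t"
    using regularity[OF D uc \<phi>c hc eq] by blast
  have uB: "u t \<le> B powr m" for t unfolding u_def using \<phi>0 B m0 by (intro powr_mono2) auto
  have u0: "u t \<ge> 0" for t unfolding u_def by simp
  have hb: "b (\<phi> (t - c * r)) \<le> d \<zeta>2" for t using bsup \<phi>0 by blast
  have hC: "isCont h t" for t using hc by (simp add: continuous_on_eq_continuous_at)
  have cr: "c * r \<ge> 0" using c r by simp
  have up: "Limsup at_top (\<lambda>t. ereal (\<phi> t)) \<le> ereal \<zeta>2"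
  proof (rule ccontr)
    assume "\<not> Limsup at_top (\<lambda>t. ereal (\<phi> t)) \<le> ereal \<zeta>2"
    then have "ereal \<zeta>2 < Limsup at_top (\<lambda>t. ereal (\<phi> t))" by simp
    then obtain l where l: "ereal \<zeta>2 < ereal l" "ereal l < Limsup at_top (\<lambda>t. ereal (\<phi> t))"
      using ereal_dense2 by blast
    have l2: "\<zeta>2 < l" using l(1) by simp
    have hpos: "h t \<ge> d l - d \<zeta>2" if "\<phi> t \<ge> l" for t
    proof -
      have "d l \<le> d (\<phi> t)" using dle[of l "\<phi> t"] that l2 zeta by simp
      then show ?thesis using hb[of t] by (simp add: h_def)
    qed
    have dl: "d l - d \<zeta>2 > 0" using dlt[of \<zeta>2 l] l2 zeta by simp
    show False
    proof (cases "\<exists>T. \<forall>t\<ge>T. \<phi> t \<ge> l")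
      case True
      then obtain T where T: "\<And>t. t \<ge> T \<Longrightarrow> \<phi> t \<ge> l" by blast
      show False
      proof (rule grow_contra[OF D dl du dw])
        show "\<And>t. w t + 0 \<le> D * v t" using vw c \<phi>0 by simp
        show "\<And>t. t \<ge> T \<Longrightarrow> d l - d \<zeta>2 \<le> h t" using T hpos by blast
        show "\<And>t. u t \<le> B powr m" by (rule uB)
      qed
    next
      case False
      then have nl: "\<And>T. \<exists>t\<ge>T. \<phi> t < l" by (auto simp: not_le)
      obtain a0 where a0: "\<phi> a0 < l" using nl by blast
      obtain t1 where t1: "t1 > a0" "\<phi> t1 > l" using freq_gt[OF l(2)] by blast
      obtain b0 where b0: "b0 \<ge> t1 + 1" "\<phi> b0 < l" using nl by blast
      have "\<exists>x\<in>{a0..b0}. \<forall>y\<in>{a0..b0}. \<phi> y \<le> \<phi> x"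
        by (rule continuous_attains_sup) (use continuous_on_subset[OF \<phi>c] t1 b0 in auto)
      then obtain s where s: "s \<in> {a0..b0}" "\<And>y. y \<in> {a0..b0} \<Longrightarrow> \<phi> y \<le> \<phi> s" by blast
      have "\<phi> s \<ge> \<phi> t1" using s(2)[of t1] t1 b0 by simp
      then have "\<phi> s > l" using t1 by simp
      then have as: "a0 < s" "s < b0" using s(1) a0 b0 by (auto simp: order.order_iff_strict)
      have "h s > 0" using hpos[of s] \<open>\<phi> s > l\<close> dl by simp
      show False
        by (rule no_max[OF D c m0 \<phi>0 _ du dw vw hC \<open>h s > 0\<close> as]) (use s(2) u_def in auto)
    qed
  qed
  have lo: "ereal \<zeta>1 \<le> Liminf at_top (\<lambda>t. ereal (\<phi> t))"
  proof (rule ccontr)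
    assume "\<not> ereal \<zeta>1 \<le> Liminf at_top (\<lambda>t. ereal (\<phi> t))"
    then have Lz: "Liminf at_top (\<lambda>t. ereal (\<phi> t)) < ereal \<zeta>1" by simp
    obtain mm where mm: "Liminf at_top (\<lambda>t. ereal (\<phi> t)) = ereal mm"
      using Li0 LiLs up by (cases "Liminf at_top (\<lambda>t. ereal (\<phi> t))") auto
    have mm0: "0 < mm" "mm < \<zeta>1" using mm Li0 Lz by auto
    have mmz: "mm \<le> \<zeta>2" using mm0 zeta by simp
    have "\<exists>x\<in>{mm..\<zeta>2}. \<forall>y\<in>{mm..\<zeta>2}. b x \<le> b y"
      by (rule continuous_attains_inf) (use continuous_on_subset[OF b_cont] mmz mm0 in auto)
    then obtain smin where smin: "smin \<in> {mm..\<zeta>2}" "\<And>y. y \<in> {mm..\<zeta>2} \<Longrightarrow> b smin \<le> b y" by blast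
    have bsm: "b smin > d mm"
    proof (cases "smin \<le> \<zeta>1")
      case True
      then have "b smin > d smin" using H3a[of smin] smin(1) mm0 by auto
      moreover have "d mm \<le> d smin" using dle[of mm smin] smin(1) mm0 by auto
      ultimately show ?thesis by simp
    next
      case False
      then have "b \<zeta>1 \<le> b smin" using H2[of smin] smin(1) by auto
      moreover have "b \<zeta>1 > d \<zeta>1" using H3a[of \<zeta>1] zeta by auto
      moreover have "d mm < d \<zeta>1" using dlt[of mm \<zeta>1] mm0 by auto
      ultimately show ?thesis by simp
    qed
    define \<epsilon> where "\<epsilon> = (b smin - d mm) / 3"
    have \<epsilon>: "\<epsilon> > 0" using bsm by (simp add: \<epsilon>_def)
    have "uniformly_continuous_on {mm/2..\<zeta>2+1} b"
      by (rule compact_uniformly_continuous) (use continuous_on_subset[OF b_cont] mm0 in auto)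
    then obtain \<eta>1 where \<eta>1: "\<eta>1 > 0"
      "\<And>x x'. x \<in> {mm/2..\<zeta>2+1} \<Longrightarrow> x' \<in> {mm/2..\<zeta>2+1} \<Longrightarrow> dist x' x < \<eta>1 \<Longrightarrow> dist (b x') (b x) < \<epsilon>"
      unfolding uniformly_continuous_on_def using \<epsilon> by metis
    have mmin: "mm \<in> {0..}" using mm0 by simp
    obtain \<eta>2 where \<eta>2: "\<eta>2 > 0" "\<And>x'. x' \<in> {0..} \<Longrightarrow> dist x' mm < \<eta>2 \<Longrightarrow> dist (d x') (d mm) < \<epsilon>"
      using dc[unfolded continuous_on_iff, rule_format, OF mmin \<epsilon>] by blast
    define \<eta> where "\<eta> = min (min \<eta>1 \<eta>2) (min (mm/2) 1) / 2"
    have \<eta>: "\<eta> > 0" "\<eta> < \<eta>1" "\<eta> < \<eta>2" "\<eta> \<le> mm/4" "\<eta> \<le> 1/2"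
      using \<eta>1 \<eta>2 mm0 by (auto simp: \<eta>_def)
    have key: "b s > d x + \<epsilon>" if s: "mm - \<eta> \<le> s" "s \<le> \<zeta>2 + \<eta>" and x: "0 \<le> x" "x \<le> mm + \<eta>" for s x
    proof -
      define s' where "s' = max mm (min s \<zeta>2)"
      have s'1: "s' \<in> {mm..\<zeta>2}" using mmz by (auto simp: s'_def)
      have s'2: "\<bar>s - s'\<bar> \<le> \<eta>" using s mmz \<eta> unfolding s'_def max_def min_def by (auto split: if_splits)
      have "dist s s' < \<eta>1" using s'2 \<eta> by (simp add: dist_real_def)
      moreover have "s \<in> {mm/2..\<zeta>2+1}" "s' \<in> {mm/2..\<zeta>2+1}" using s s'1 \<eta> mm0 by auto
      ultimately have "dist (b s) (b s') < \<epsilon>" using \<eta>1(2) by blast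
      then have bs: "b s > b s' - \<epsilon>" by (simp add: dist_real_def abs_if split: if_splits)
      have "b s' \<ge> b smin" using smin(2) s'1 by blast
      have dx: "d x < d mm + \<epsilon>"
      proof (cases "x \<le> mm")
        case True then show ?thesis using dle[of x mm] x \<epsilon> by simp
      next
        case False
        then have "dist x mm < \<eta>2" using x \<eta> by (simp add: dist_real_def)
        then have "dist (d x) (d mm) < \<epsilon>" using \<eta>2(2)[of x] x by simp
        then show ?thesis by (simp add: dist_real_def abs_if split: if_splits)
      qed
      have "b smin = d mm + 3 * \<epsilon>" unfolding \<epsilon>_def by (simp add: field_simps)
      then show ?thesis using bs \<open>b s' \<ge> b smin\<close> dx \<epsilon> by linarith
    qed
    have "ereal (mm - \<eta>) < Liminf at_top (\<lambda>t. ereal (\<phi> t))" using mm \<eta> by simp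
    then obtain T1 where T1: "\<And>t. t \<ge> T1 \<Longrightarrow> \<phi> t > mm - \<eta>" using ev_gt by blast
    have "ereal \<zeta>2 < ereal (\<zeta>2 + \<eta>)" using \<eta> by simp
    then have "Limsup at_top (\<lambda>t. ereal (\<phi> t)) < ereal (\<zeta>2 + \<eta>)" using up by (rule le_less_trans[rotated])
    then obtain T2 where T2: "\<And>t. t \<ge> T2 \<Longrightarrow> \<phi> t < \<zeta>2 + \<eta>" using ev_lt by blast
    define T where "T = max T1 T2 + c * r"
    have hneg: "h t < - \<epsilon>" if "t \<ge> T" "\<phi> t \<le> mm + \<eta>" for t
    proof -
      have "t - c * r \<ge> T1" "t - c * r \<ge> T2" using that by (auto simp: T_def)
      then have "b (\<phi> (t - c * r)) > d (\<phi> t) + \<epsilon>"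
        using key[OF less_imp_le[OF T1] less_imp_le[OF T2] \<phi>0 that(2)] by blast
      then show ?thesis by (simp add: h_def)
    qed
    show False
    proof (cases "\<exists>T3. \<forall>t\<ge>T3. \<phi> t \<le> mm + \<eta>")
      case True
      then obtain T3 where T3: "\<And>t. t \<ge> T3 \<Longrightarrow> \<phi> t \<le> mm + \<eta>" by blast
      show False
      proof (rule grow_contra[OF D \<epsilon>, of "\<lambda>t. - u t" "\<lambda>t. - v t" "\<lambda>t. - w t" "\<lambda>t. - h t" "- c * B" "max T T3" 0])
        show "\<And>t. ((\<lambda>t. - u t) has_real_derivative - v t) (at t)" using du by (auto intro: derivative_intros)
        show "\<And>t. ((\<lambda>t. - w t) has_real_derivative - h t) (at t)" using dw by (auto intro: derivative_intros)
        show "\<And>t. - w t + - c * B \<le> D * - v t"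
        proof -
          fix t have "c * \<phi> t \<le> c * B" using B c by simp
          then show "- w t + - c * B \<le> D * - v t" using vw[of t] by simp
        qed
        show "\<epsilon> \<le> - h t" if "t \<ge> max T T3" for t using hneg[of t] T3[of t] that by simp
        show "\<And>t. - u t \<le> 0" using u0 by simp
      qed
    next
      case False
      then have nl: "\<And>T3. \<exists>t\<ge>T3. \<phi> t > mm + \<eta>" by (auto simp: not_le)
      have "Liminf at_top (\<lambda>t. ereal (\<phi> t)) < ereal (mm + \<eta>/2)" using mm \<eta> by simp
      note fl = freq_lt[OF this]
      obtain a0 where a0: "a0 \<ge> T" "\<phi> a0 > mm + \<eta>" using nl by blast
      obtain t1 where t1: "t1 > a0" "\<phi> t1 < mm + \<eta>/2" using fl by blast
      obtain b0 where b0: "b0 \<ge> t1 + 1" "\<phi> b0 > mm + \<eta>" using nl by blast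
      have "\<exists>x\<in>{a0..b0}. \<forall>y\<in>{a0..b0}. \<phi> x \<le> \<phi> y"
        by (rule continuous_attains_inf) (use continuous_on_subset[OF \<phi>c] t1 b0 in auto)
      then obtain s where s: "s \<in> {a0..b0}" "\<And>y. y \<in> {a0..b0} \<Longrightarrow> \<phi> s \<le> \<phi> y" by blast
      have "\<phi> s \<le> \<phi> t1" using s(2)[of t1] t1 b0 by simp
      then have ps: "\<phi> s < mm + \<eta>/2" using t1 by simp
      then have as: "a0 < s" "s < b0" using s(1) a0 b0 \<eta> by (auto simp: order.order_iff_strict)
      have "h s < - \<epsilon>" using hneg[of s] ps as a0 \<eta> by simp
      then have "h s < 0" using \<epsilon> by simp
      show False
        by (rule no_min[OF D c m0 \<phi>0 _ du dw vw hC \<open>h s < 0\<close> as]) (use s(2) u_def in auto)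
    qed
  qed
  show ?thesis using zeta lo LiLs up by simp
qed

end
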